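(* Let $f:\mathbb R^p\to\mathbb R$ be differentiable with Lipschitz gradient and $m$-strongly convex ($m\geqslant0$). Let $X,Y$ be square-integrable $p$-dimensional random vectors and $(W_t)_{t\geqslant0}$ a $p$-dimensional Brownian motion independent of $Y$. Set $X_t=X+\sqrt2\,W_t$ and let $(L_t)_{t\geqslant0}$ solve $dL_t=-\nabla f(L_t)\,dt+\sqrt2\,dW_t$, $L_0=Y$. For $h\geqslant0$ set $\psi(h)=\|X_h-L_h\|_2^2+m\int_0^h\|X_h-L_s\|_2^2\,ds$. Then $$\psi(h)\leqslant\|X-L_0\|_2^2+\int_0^h2\big(f(X_s)-f(L_s)\big)\,ds+R_1(h),$$ $$\psi(h)\leqslant\|X-L_0\|_2^2+2h\big(f(X_h)-f(L_h)\big)+R_2(h),$$ where $$R_1(h)=m\int_0^h\big\{\|X_h-L_s\|_2^2-\|X_s-L_s\|_2^2\big\}ds,\qquad R_2(h)=2\int_0^h\big\{f(L_h)-f(L_s)-\sqrt2(W_h-W_s)^\top\nabla f(L_s)\big\}ds .$$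
   Context: $m$-strong convexity means $f(\theta')\geqslant f(\theta)+\nabla f(\theta)^\top(\theta'-\theta)+\frac m2\|\theta'-\theta\|_2^2$ for all $\theta,\theta'$. The inequalities hold pointwise (almost surely). *)

theory Defs
  imports "HOL-Analysis.Analysis" "HOL-Probability.Probability"
begin

definition brownian_motion :: "'a measure \<Rightarrow> (real \<Rightarrow> 'a \<Rightarrow> real^'p) \<Rightarrow> bool" where
  "brownian_motion M W \<longleftrightarrow>
     prob_space M \<and>
     (\<forall>t\<ge>0. W t \<in> borel_measurable M) \<and>
     (AE \<omega> in M. W 0 \<omega> = 0 \<and> continuous_on {0..} (\<lambda>t. W t \<omega>)) \<and>
     (\<forall>(n::nat) (t::nat \<Rightarrow> real). 0 \<le> t 0 \<and> incseq t \<longrightarrow>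
        prob_space.indep_vars M (\<lambda>_. borel) (\<lambda>i \<omega>. W (t (Suc i)) \<omega> - W (t i) \<omega>) {..<n}) \<and>
     (\<forall>s t. 0 \<le> s \<and> s < t \<longrightarrow>
        prob_space.indep_vars M (\<lambda>_. borel) (\<lambda>i \<omega>. (W t \<omega> - W s \<omega>) $ i) UNIV \<and>
        (\<forall>i. distributed M lborel (\<lambda>\<omega>. (W t \<omega> - W s \<omega>) $ i)
                (\<lambda>x. ennreal (normal_density 0 (sqrt (t - s)) x))))"

definition rv_events :: "'a measure \<Rightarrow> ('a \<Rightarrow> 'b::topological_space) \<Rightarrow> 'a set set" where
  "rv_events M Z = {Z -` A \<inter> space M | A. A \<in> sets borel}"

definition process_events :: "'a measure \<Rightarrow> (real \<Rightarrow> 'a \<Rightarrow> 'b::topological_space) \<Rightarrow> real set \<Rightarrow> 'a set set" where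
  "process_events M W T = (\<Union>t\<in>T. rv_events M (W t))"

end

theory Submission
  imports Defs
begin

lemma det:
  fixes f :: "real^'p \<Rightarrow> real" and grad :: "real^'p \<Rightarrow> real^'p"
    and x y :: "real^'p" and w l :: "real \<Rightarrow> real^'p" and m h :: real
  assumes cg: "continuous_on UNIV grad" and cf: "continuous_on UNIV f"
    and conv: "\<forall>\<theta> \<theta>'. f \<theta>' \<ge> f \<theta> + grad \<theta> \<bullet> (\<theta>' - \<theta>) + m / 2 * (norm (\<theta>' - \<theta>))\<^sup>2"
    and m0: "m \<ge> 0"
    and cw: "continuous_on {0..} w" and w0: "w 0 = 0"
    and cl: "continuous_on {0..} l"
    and sde: "\<forall>t\<ge>0. l t = y - integral {0..t} (\<lambda>s. grad (l s)) + sqrt 2 *\<^sub>R w t"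
    and h0: "h \<ge> 0"
  shows "(norm ((x + sqrt 2 *\<^sub>R w h) - l h))\<^sup>2
                     + m * integral {0..h} (\<lambda>s. (norm ((x + sqrt 2 *\<^sub>R w h) - l s))\<^sup>2)
           \<le> (norm (x - l 0))\<^sup>2
                     + integral {0..h} (\<lambda>s. 2 * (f ((x + sqrt 2 *\<^sub>R w s)) - f (l s)))
             + m * integral {0..h}
                     (\<lambda>s. (norm ((x + sqrt 2 *\<^sub>R w h) - l s))\<^sup>2 - (norm ((x + sqrt 2 *\<^sub>R w s) - l s))\<^sup>2)
         \<and> (norm ((x + sqrt 2 *\<^sub>R w h) - l h))\<^sup>2
                     + m * integral {0..h} (\<lambda>s. (norm ((x + sqrt 2 *\<^sub>R w h) - l s))\<^sup>2)
           \<le> (norm (x - l 0))\<^sup>2 + 2 * h * (f ((x + sqrt 2 *\<^sub>R w h)) - f (l h)) + 2 * integral {0..h}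
                     (\<lambda>s. f (l h) - f (l s) - sqrt 2 * ((w h - w s) \<bullet> grad (l s)))"
proof -
  have sub: "{0..h} \<subseteq> {0::real..}" by auto
  have clh: "continuous_on {0..h} l" using continuous_on_subset[OF cl sub] .
  have cwh: "continuous_on {0..h} w" using continuous_on_subset[OF cw sub] .
  have cgl: "continuous_on {0..h} (\<lambda>s. grad (l s))"
    using continuous_on_compose2[OF cg clh] by auto
  have cfl: "continuous_on {0..h} (\<lambda>s. f (l s))"
    using continuous_on_compose2[OF cf clh] by auto
  have cfx: "continuous_on {0..h} (\<lambda>s. f (x + sqrt 2 *\<^sub>R w s))"
    by (rule continuous_on_compose2[OF cf]) (auto intro!: continuous_intros cwh)
  define G where "G t = integral {0..t} (\<lambda>s. grad (l s))" for t
  define D where "D t = x - y + G t" for t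
  have Deq: "D t = x + sqrt 2 *\<^sub>R w t - l t" if "t \<ge> 0" for t
    using sde that by (simp add: D_def G_def)
  have D0: "D 0 = x - l 0" using Deq[of 0] w0 by simp
  have dG: "(G has_vector_derivative grad (l t)) (at t within {0..h})" if "t \<in> {0..h}" for t
    unfolding G_def by (rule integral_has_vector_derivative[OF cgl that])
  have dD: "((\<lambda>t. D t \<bullet> D t) has_vector_derivative (2 * (D t \<bullet> grad (l t)))) (at t within {0..h})"
    if "t \<in> {0..h}" for t
  proof -
    have d1: "(D has_vector_derivative grad (l t)) (at t within {0..h})"
      unfolding D_def using dG[OF that] by (auto intro!: derivative_eq_intros)
    show ?thesis
      using bounded_bilinear.has_vector_derivative[OF bounded_bilinear_inner d1 d1]
      by (simp add: inner_commute)
  qed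
  have FT: "((\<lambda>t. 2 * (D t \<bullet> grad (l t))) has_integral (D h \<bullet> D h - D 0 \<bullet> D 0)) {0..h}"
    by (rule fundamental_theorem_of_calculus[OF h0 dD])
  have key: "(norm (D h))\<^sup>2 = (norm (D 0))\<^sup>2 + integral {0..h} (\<lambda>t. 2 * (D t \<bullet> grad (l t)))"
    using integral_unique[OF FT] by (simp add: power2_norm_eq_inner)
  define Xs where "Xs s = x + sqrt 2 *\<^sub>R w s" for s
  define A where "A s = (norm (Xs h - l s))\<^sup>2" for s
  define B where "B s = (norm (Xs s - l s))\<^sup>2" for s
  define F1 where "F1 s = 2 * (f (Xs s) - f (l s))" for s
  define F2 where "F2 s = f (l h) - f (l s) - sqrt 2 * ((w h - w s) \<bullet> grad (l s))" for s
  have cX: "continuous_on {0..h} Xs" unfolding Xs_def by (auto intro!: continuous_intros cwh)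
  have iA: "A integrable_on {0..h}" unfolding A_def
    by (rule integrable_continuous_interval) (auto intro!: continuous_intros cX clh)
  have iB: "B integrable_on {0..h}" unfolding B_def
    by (rule integrable_continuous_interval) (auto intro!: continuous_intros cX clh)
  have iF1: "F1 integrable_on {0..h}" unfolding F1_def
    by (rule integrable_continuous_interval) (use cfx cfl in \<open>auto intro!: continuous_intros simp: Xs_def\<close>)
  have iF2: "F2 integrable_on {0..h}" unfolding F2_def
    by (rule integrable_continuous_interval) (auto intro!: continuous_intros cfl cwh cgl)
  have iL: "(\<lambda>t. 2 * (D t \<bullet> grad (l t))) integrable_on {0..h}"
    using FT has_integral_integrable by blast
  have DX: "D s = Xs s - l s" if "s \<in> {0..h}" for s using Deq[of s] that by (simp add: Xs_def)
  have p1: "2 * (D s \<bullet> grad (l s)) \<le> F1 s - m * B s" if "s \<in> {0..h}" for s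
  proof -
    have "f (Xs s) \<ge> f (l s) + grad (l s) \<bullet> (Xs s - l s) + m / 2 * (norm (Xs s - l s))\<^sup>2"
      using conv by blast
    then show ?thesis using DX[OF that] by (simp add: F1_def B_def inner_commute)
  qed
  have p2: "2 * (D s \<bullet> grad (l s)) \<le> 2 * F2 s + 2 * (f (Xs h) - f (l h)) - m * A s"
    if "s \<in> {0..h}" for s
  proof -
    have c: "f (Xs h) \<ge> f (l s) + grad (l s) \<bullet> (Xs h - l s) + m / 2 * (norm (Xs h - l s))\<^sup>2"
      using conv by blast
    have "D s = (Xs h - l s) - sqrt 2 *\<^sub>R (w h - w s)"
      using DX[OF that] by (simp add: Xs_def algebra_simps)
    then have "D s \<bullet> grad (l s) = grad (l s) \<bullet> (Xs h - l s) - sqrt 2 * ((w h - w s) \<bullet> grad (l s))"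
      by (simp add: inner_diff_left inner_diff_right inner_commute)
    then show ?thesis using c by (simp add: F2_def A_def)
  qed
  have I1: "integral {0..h} (\<lambda>t. 2 * (D t \<bullet> grad (l t))) \<le> integral {0..h} (\<lambda>s. F1 s - m * B s)"
    by (rule integral_le[OF iL _ p1]) (intro integrable_diff iF1 integrable_on_mult_right iB)
  have I2: "integral {0..h} (\<lambda>t. 2 * (D t \<bullet> grad (l t))) \<le>
      integral {0..h} (\<lambda>s. 2 * F2 s + 2 * (f (Xs h) - f (l h)) - m * A s)"
    by (rule integral_le[OF iL _ p2]) (intro integrable_diff integrable_add iF2 integrable_on_mult_right iA integrable_const_ivl)
  have e1: "integral {0..h} (\<lambda>s. F1 s - m * B s) = integral {0..h} F1 - m * integral {0..h} B"
    using integral_diff[OF iF1 integrable_on_mult_right[OF iB, of m]] by simp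
  have e2: "integral {0..h} (\<lambda>s. 2 * F2 s + 2 * (f (Xs h) - f (l h)) - m * A s)
     = 2 * integral {0..h} F2 + h * (2 * (f (Xs h) - f (l h))) - m * integral {0..h} A"
  proof -
    have a: "(\<lambda>s. 2 * F2 s) integrable_on {0..h}" by (rule integrable_on_mult_right[OF iF2])
    have b: "(\<lambda>s. 2 * F2 s + 2 * (f (Xs h) - f (l h))) integrable_on {0..h}"
      by (rule integrable_add[OF a integrable_const_ivl])
    have "integral {0..h} (\<lambda>s. 2 * F2 s + 2 * (f (Xs h) - f (l h)) - m * A s)
      = integral {0..h} (\<lambda>s. 2 * F2 s + 2 * (f (Xs h) - f (l h))) - integral {0..h} (\<lambda>s. m * A s)"
      by (rule integral_diff[OF b integrable_on_mult_right[OF iA]])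
    also have "integral {0..h} (\<lambda>s. 2 * F2 s + 2 * (f (Xs h) - f (l h)))
       = integral {0..h} (\<lambda>s. 2 * F2 s) + integral {0..h} (\<lambda>s. 2 * (f (Xs h) - f (l h)))"
      by (rule integral_add[OF a integrable_const_ivl])
    finally show ?thesis using h0 by simp
  qed
  have e3: "m * integral {0..h} (\<lambda>s. A s - B s) = m * integral {0..h} A - m * integral {0..h} B"
    using iA iB by (simp add: integral_diff right_diff_distrib)
  have Dh: "(norm (D h))\<^sup>2 = B h" using DX[of h] h0 by (simp add: B_def)
  have D0': "(norm (D 0))\<^sup>2 = (norm (x - l 0))\<^sup>2" using D0 by simp
  have fin1: "B h + m * integral {0..h} A \<le> (norm (x - l 0))\<^sup>2 + integral {0..h} F1
      + m * integral {0..h} (\<lambda>s. A s - B s)"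
    using key D0' Dh I1 e1 e3 by linarith
  have fin2: "B h + m * integral {0..h} A \<le> (norm (x - l 0))\<^sup>2 + 2 * h * (f (Xs h) - f (l h))
      + 2 * integral {0..h} F2"
    using key D0' Dh I2 e2 by (simp add: algebra_simps)
  show ?thesis using fin1 fin2 unfolding A_def[abs_def] B_def[abs_def] F1_def[abs_def] F2_def[abs_def] Xs_def[abs_def] by simp
qed

theorem lemma4:
  fixes M :: "'a measure" and f :: "real^'p \<Rightarrow> real" and grad :: "real^'p \<Rightarrow> real^'p"
    and m :: real and X Y :: "'a \<Rightarrow> real^'p" and W L :: "real \<Rightarrow> 'a \<Rightarrow> real^'p"
  assumes prob: "prob_space M"
    and deriv: "\<forall>x. (f has_derivative (\<lambda>v. grad x \<bullet> v)) (at x)"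
    and lip: "\<exists>C. C-lipschitz_on UNIV grad"
    and m_nonneg: "m \<ge> 0"
    and strong_convex: "\<forall>\<theta> \<theta>'. f \<theta>' \<ge> f \<theta> + grad \<theta> \<bullet> (\<theta>' - \<theta>) + m / 2 * (norm (\<theta>' - \<theta>))\<^sup>2"
    and X_rv: "X \<in> borel_measurable M" and X_L2: "integrable M (\<lambda>\<omega>. (norm (X \<omega>))\<^sup>2)"
    and Y_rv: "Y \<in> borel_measurable M" and Y_L2: "integrable M (\<lambda>\<omega>. (norm (Y \<omega>))\<^sup>2)"
    and BM: "brownian_motion M W"
    and indep: "prob_space.indep_set M (sigma_sets (space M) (rv_events M Y))
                  (sigma_sets (space M) (process_events M W {0..}))"
    and L_adapted: "\<forall>t\<ge>0. L t \<in> measurable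
                  (sigma (space M) (rv_events M Y \<union> process_events M W {0..t})) borel"
    and L_sde: "AE \<omega> in M. continuous_on {0..} (\<lambda>t. L t \<omega>) \<and>
                  (\<forall>t\<ge>0. L t \<omega> = Y \<omega> - integral {0..t} (\<lambda>s. grad (L s \<omega>)) + sqrt 2 *\<^sub>R W t \<omega>)"
  defines "\<psi> \<equiv> (\<lambda>h \<omega>. (norm ((X \<omega> + sqrt 2 *\<^sub>R W h \<omega>) - L h \<omega>))\<^sup>2
                     + m * integral {0..h} (\<lambda>s. (norm ((X \<omega> + sqrt 2 *\<^sub>R W h \<omega>) - L s \<omega>))\<^sup>2))"
    and "R1 \<equiv> (\<lambda>h \<omega>. m * integral {0..h}
                     (\<lambda>s. (norm ((X \<omega> + sqrt 2 *\<^sub>R W h \<omega>) - L s \<omega>))\<^sup>2 - (norm ((X \<omega> + sqrt 2 *\<^sub>R W s \<omega>) - L s \<omega>))\<^sup>2))"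
    and "R2 \<equiv> (\<lambda>h \<omega>. 2 * integral {0..h}
                     (\<lambda>s. f (L h \<omega>) - f (L s \<omega>) - sqrt 2 * ((W h \<omega> - W s \<omega>) \<bullet> grad (L s \<omega>))))"
  shows "\<forall>h\<ge>0. AE \<omega> in M.
           \<psi> h \<omega> \<le> (norm (X \<omega> - L 0 \<omega>))\<^sup>2
                     + integral {0..h} (\<lambda>s. 2 * (f ((X \<omega> + sqrt 2 *\<^sub>R W s \<omega>)) - f (L s \<omega>))) + R1 h \<omega>
         \<and> \<psi> h \<omega> \<le> (norm (X \<omega> - L 0 \<omega>))\<^sup>2 + 2 * h * (f ((X \<omega> + sqrt 2 *\<^sub>R W h \<omega>)) - f (L h \<omega>)) + R2 h \<omega>"
proof -
  obtain C where C: "C-lipschitz_on UNIV grad" using lip by blast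
  have cg: "continuous_on UNIV grad" by (rule lipschitz_on_continuous_on[OF C])
  have cf: "continuous_on UNIV f"
    using deriv by (meson continuous_at_imp_continuous_on has_derivative_continuous)
  have W_ae: "AE \<omega> in M. W 0 \<omega> = 0 \<and> continuous_on {0..} (\<lambda>t. W t \<omega>)"
    using BM unfolding brownian_motion_def by blast
  show ?thesis
  proof (intro allI impI)
    fix h :: real assume h0: "h \<ge> 0"
    show "AE \<omega> in M. \<psi> h \<omega> \<le> (norm (X \<omega> - L 0 \<omega>))\<^sup>2
                     + integral {0..h} (\<lambda>s. 2 * (f ((X \<omega> + sqrt 2 *\<^sub>R W s \<omega>)) - f (L s \<omega>))) + R1 h \<omega>
         \<and> \<psi> h \<omega> \<le> (norm (X \<omega> - L 0 \<omega>))\<^sup>2 + 2 * h * (f ((X \<omega> + sqrt 2 *\<^sub>R W h \<omega>)) - f (L h \<omega>)) + R2 h \<omega>"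
      using W_ae L_sde
    proof eventually_elim
      case (elim \<omega>)
      show ?case
        unfolding \<psi>_def R1_def R2_def
        by (rule det[OF cg cf strong_convex m_nonneg, of "\<lambda>t. W t \<omega>" "\<lambda>t. L t \<omega>" "Y \<omega>" h "X \<omega>"])
           (use elim h0 in auto)
    qed
  qed
qed

end
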